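(* Let $\mathcal Q$ be a complete orthomodular lattice and $V^{(\mathcal Q)}$ the $\mathcal Q$-valued universe. Let $[\![\cdot]\!]_{\mathcal Q}$ be a $\mathcal Q$-valued interpretation of the closed formulas of $NOM_{\mathcal Q}$ satisfying $[\![\phi\wedge\psi]\!]_{\mathcal Q}=[\![\phi]\!]_{\mathcal Q}\wedge[\![\psi]\!]_{\mathcal Q}$, $[\![\neg\phi]\!]_{\mathcal Q}=\neg[\![\phi]\!]_{\mathcal Q}$, $[\![\phi\rightarrow\psi]\!]_{\mathcal Q}=\neg[\![\phi]\!]_{\mathcal Q}\vee([\![\phi]\!]_{\mathcal Q}\wedge[\![\psi]\!]_{\mathcal Q})$ (Sasaki arrow), and $[\![(\forall x)\phi]\!]_{\mathcal Q}=\bigwedge_{u\in V^{(\mathcal Q)}}[\![\phi[x/u]]\!]_{\mathcal Q}$ (e.g., Takeuti's interpretation). For every closed formula $\phi$ of $NOM_{\mathcal Q}$, if $\vdash\phi$ is derivable in $NOM_{\mathcal Q}$, then $[\![\phi]\!]_{\mathcal Q}=\top$.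
   Context: A complete orthomodular lattice is a complete lattice with an order-reversing involution $\neg$ satisfying $a\wedge\neg a=\bot$, $a\vee\neg a=\top$, $a\le b\Rightarrow a\vee(\neg a\wedge b)=b$. $V^{(\mathcal Q)}$ is Takeuti's $\mathcal Q$-valued universe (defined as Boolean-valued models $V^{(\mathcal B)}$ with $\mathcal B$ replaced by $\mathcal Q$); the interpretation of atomic formulas $u=v$, $u\in v$ is a given element of $\mathcal Q$ and plays no role beyond the stated compositional clauses. The system $NOM_{\mathcal Q}$: formulas are first-order formulas with connectives $\wedge,\rightarrow,\neg$, quantifier $\forall$, relation symbols $=$ and $\in$, and constant symbols the elements of $V^{(\mathcal Q)}$ (no other function symbols); formulas differing only in names of bound variables are identified. Sequents $\phi_1,\ldots,\phi_n\vdash\psi$ have ordered finite antecedents. Rules, with $\Gamma$ a finite possibly empty sequence: (assumption) $\Gamma,\phi\vdash\phi$; (cut) $\Gamma\vdash\phi$, $\Gamma,\phi\vdash\psi$ $\Rightarrow$ $\Gamma\vdash\psi$; (paste) $\Gamma\vdash\phi$, $\Gamma\vdash\psi$ $\Rightarrow$ $\Gamma,\phi\vdash\psi$; (compatible exchange) $\Gamma,\phi,\psi\vdash\phi$, $\Gamma,\phi,\psi\vdash\chi$, $\Gamma,\psi,\phi\vdash\psi$ $\Rightarrow$ $\Gamma,\psi,\phi\vdash\chi$; ($\wedge$-intro) $\Gamma\vdash\phi$, $\Gamma\vdash\psi$ $\Rightarrow$ $\Gamma\vdash\phi\wedge\psi$; ($\wedge$-elim) $\Gamma\vdash\phi\wedge\psi$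 $\Rightarrow$ $\Gamma\vdash\phi$ and $\Rightarrow$ $\Gamma\vdash\psi$; ($\rightarrow$-intro) $\Gamma,\phi\vdash\psi$ $\Rightarrow$ $\Gamma\vdash\phi\rightarrow\psi$; ($\rightarrow$-elim) $\Gamma\vdash\phi\rightarrow\psi$ $\Rightarrow$ $\Gamma,\phi\vdash\psi$; (excluded middle) $\Gamma,\phi\vdash\psi$, $\Gamma,\neg\phi\vdash\psi$ $\Rightarrow$ $\Gamma\vdash\psi$; (explosion) $\Gamma\vdash\neg\phi$ $\Rightarrow$ $\Gamma,\phi\vdash\psi$; ($\forall$-intro) $\Gamma\vdash\phi$ $\Rightarrow$ $\Gamma\vdash(\forall x)\phi$, provided $x$ is not free in $\Gamma$; ($\forall$-elim) $\Gamma\vdash(\forall x)\phi$ $\Rightarrow$ $\Gamma\vdash\phi[x/t]$ for any term $t$. *)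

theory Defs
  imports Main
begin

definition complete_oml :: "('a::complete_lattice \<Rightarrow> 'a) \<Rightarrow> bool" where
  "complete_oml neg \<longleftrightarrow>
     (\<forall>a b. a \<le> b \<longrightarrow> neg b \<le> neg a) \<and>
     (\<forall>a. neg (neg a) = a) \<and>
     (\<forall>a. inf a (neg a) = bot) \<and>
     (\<forall>a. sup a (neg a) = top) \<and>
     (\<forall>a b. a \<le> b \<longrightarrow> sup a (inf (neg a) b) = b)"

text \<open>Free variables are named (by natural numbers), bound variables are de Bruijn
  indices; hence formulas differing only in the names of bound variables are identified.
  Constants are elements of the type 'c (standing for the universe V^(Q)).\<close>

datatype 'c trm = Var nat | Cst 'c | Bnd nat

datatype 'c fm =
    Eq "'c trm" "'c trm"
  | Mem "'c trm" "'c trm"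
  | Conj "'c fm" "'c fm"
  | Imp "'c fm" "'c fm"
  | Neg "'c fm"
  | All "'c fm"

fun inst_trm :: "nat \<Rightarrow> 'c trm \<Rightarrow> 'c trm \<Rightarrow> 'c trm" where
  "inst_trm k t (Bnd i) = (if i = k then t else Bnd i)"
| "inst_trm k t s = s"

fun inst :: "nat \<Rightarrow> 'c trm \<Rightarrow> 'c fm \<Rightarrow> 'c fm" where
  "inst k t (Eq a b) = Eq (inst_trm k t a) (inst_trm k t b)"
| "inst k t (Mem a b) = Mem (inst_trm k t a) (inst_trm k t b)"
| "inst k t (Conj \<phi> \<psi>) = Conj (inst k t \<phi>) (inst k t \<psi>)"
| "inst k t (Imp \<phi> \<psi>) = Imp (inst k t \<phi>) (inst k t \<psi>)"
| "inst k t (Neg \<phi>) = Neg (inst k t \<phi>)"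
| "inst k t (All \<phi>) = All (inst (Suc k) t \<phi>)"

fun abst_trm :: "nat \<Rightarrow> nat \<Rightarrow> 'c trm \<Rightarrow> 'c trm" where
  "abst_trm k x (Var y) = (if y = x then Bnd k else Var y)"
| "abst_trm k x s = s"

fun abst :: "nat \<Rightarrow> nat \<Rightarrow> 'c fm \<Rightarrow> 'c fm" where
  "abst k x (Eq a b) = Eq (abst_trm k x a) (abst_trm k x b)"
| "abst k x (Mem a b) = Mem (abst_trm k x a) (abst_trm k x b)"
| "abst k x (Conj \<phi> \<psi>) = Conj (abst k x \<phi>) (abst k x \<psi>)"
| "abst k x (Imp \<phi> \<psi>) = Imp (abst k x \<phi>) (abst k x \<psi>)"
| "abst k x (Neg \<phi>) = Neg (abst k x \<phi>)"
| "abst k x (All \<phi>) = All (abst (Suc k) x \<phi>)"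

fun fv_trm :: "'c trm \<Rightarrow> nat set" where
  "fv_trm (Var x) = {x}"
| "fv_trm _ = {}"

fun fv :: "'c fm \<Rightarrow> nat set" where
  "fv (Eq a b) = fv_trm a \<union> fv_trm b"
| "fv (Mem a b) = fv_trm a \<union> fv_trm b"
| "fv (Conj \<phi> \<psi>) = fv \<phi> \<union> fv \<psi>"
| "fv (Imp \<phi> \<psi>) = fv \<phi> \<union> fv \<psi>"
| "fv (Neg \<phi>) = fv \<phi>"
| "fv (All \<phi>) = fv \<phi>"

fun bnd_ok_trm :: "nat \<Rightarrow> 'c trm \<Rightarrow> bool" where
  "bnd_ok_trm k (Bnd i) = (i < k)"
| "bnd_ok_trm k _ = True"

fun bnd_ok :: "nat \<Rightarrow> 'c fm \<Rightarrow> bool" where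
  "bnd_ok k (Eq a b) = (bnd_ok_trm k a \<and> bnd_ok_trm k b)"
| "bnd_ok k (Mem a b) = (bnd_ok_trm k a \<and> bnd_ok_trm k b)"
| "bnd_ok k (Conj \<phi> \<psi>) = (bnd_ok k \<phi> \<and> bnd_ok k \<psi>)"
| "bnd_ok k (Imp \<phi> \<psi>) = (bnd_ok k \<phi> \<and> bnd_ok k \<psi>)"
| "bnd_ok k (Neg \<phi>) = bnd_ok k \<phi>"
| "bnd_ok k (All \<phi>) = bnd_ok (Suc k) \<phi>"

definition lc :: "'c fm \<Rightarrow> bool" where
  "lc \<phi> \<longleftrightarrow> bnd_ok 0 \<phi>"

definition closed :: "'c fm \<Rightarrow> bool" where
  "closed \<phi> \<longleftrightarrow> lc \<phi> \<and> fv \<phi> = {}"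

fun is_term :: "'c trm \<Rightarrow> bool" where
  "is_term (Bnd _) = False"
| "is_term _ = True"

text \<open>deriv \<Gamma> \<psi> means the sequent \<Gamma> \<turnstile> \<psi> is derivable; the antecedent \<Gamma> is an
  ordered list, "\<Gamma>, \<phi>" is \<Gamma> @ [\<phi>].  The well-formedness side conditions on the
  rules that introduce new formulas only ensure that all formulas are well-formed.\<close>

inductive deriv :: "'c fm list \<Rightarrow> 'c fm \<Rightarrow> bool" where
  assumption: "\<lbrakk>\<forall>\<gamma>\<in>set \<Gamma>. lc \<gamma>; lc \<phi>\<rbrakk> \<Longrightarrow> deriv (\<Gamma> @ [\<phi>]) \<phi>"
| cut: "\<lbrakk>deriv \<Gamma> \<phi>; deriv (\<Gamma> @ [\<phi>]) \<psi>\<rbrakk> \<Longrightarrow> deriv \<Gamma> \<psi>"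
| paste: "\<lbrakk>deriv \<Gamma> \<phi>; deriv \<Gamma> \<psi>\<rbrakk> \<Longrightarrow> deriv (\<Gamma> @ [\<phi>]) \<psi>"
| compat_exchange: "\<lbrakk>deriv (\<Gamma> @ [\<phi>, \<psi>]) \<phi>; deriv (\<Gamma> @ [\<phi>, \<psi>]) \<chi>;
      deriv (\<Gamma> @ [\<psi>, \<phi>]) \<psi>\<rbrakk> \<Longrightarrow> deriv (\<Gamma> @ [\<psi>, \<phi>]) \<chi>"
| conj_intro: "\<lbrakk>deriv \<Gamma> \<phi>; deriv \<Gamma> \<psi>\<rbrakk> \<Longrightarrow> deriv \<Gamma> (Conj \<phi> \<psi>)"
| conj_elim1: "deriv \<Gamma> (Conj \<phi> \<psi>) \<Longrightarrow> deriv \<Gamma> \<phi>"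
| conj_elim2: "deriv \<Gamma> (Conj \<phi> \<psi>) \<Longrightarrow> deriv \<Gamma> \<psi>"
| imp_intro: "deriv (\<Gamma> @ [\<phi>]) \<psi> \<Longrightarrow> deriv \<Gamma> (Imp \<phi> \<psi>)"
| imp_elim: "deriv \<Gamma> (Imp \<phi> \<psi>) \<Longrightarrow> deriv (\<Gamma> @ [\<phi>]) \<psi>"
| excluded_middle: "\<lbrakk>deriv (\<Gamma> @ [\<phi>]) \<psi>; deriv (\<Gamma> @ [Neg \<phi>]) \<psi>\<rbrakk> \<Longrightarrow> deriv \<Gamma> \<psi>"
| explosion: "\<lbrakk>deriv \<Gamma> (Neg \<phi>); lc \<psi>\<rbrakk> \<Longrightarrow> deriv (\<Gamma> @ [\<phi>]) \<psi>"
| all_intro: "\<lbrakk>deriv \<Gamma> \<phi>; \<forall>\<gamma>\<in>set \<Gamma>. x \<notin> fv \<gamma>\<rbrakk> \<Longrightarrow> deriv \<Gamma> (All (abst 0 x \<phi>))"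
| all_elim: "\<lbrakk>deriv \<Gamma> (All \<phi>); is_term t\<rbrakk> \<Longrightarrow> deriv \<Gamma> (inst 0 t \<phi>)"

end

theory Submission
  imports Defs
begin

definition pj :: "('q::complete_lattice \<Rightarrow> 'q) \<Rightarrow> 'q \<Rightarrow> 'q \<Rightarrow> 'q" where
  "pj neg a c = inf a (sup (neg a) c)"

context
  fixes neg :: "'q::complete_lattice \<Rightarrow> 'q"
  assumes oml: "complete_oml neg"
begin

lemma anti: "a \<le> b \<Longrightarrow> neg b \<le> neg a" using oml unfolding complete_oml_def by blast
lemma invol[simp]: "neg (neg a) = a" using oml unfolding complete_oml_def by blast
lemma infc[simp]: "inf a (neg a) = bot" using oml unfolding complete_oml_def by blast
lemma om: "a \<le> b \<Longrightarrow> sup a (inf (neg a) b) = b" using oml unfolding complete_oml_def by blast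

lemma anti_iff: "neg b \<le> neg a \<longleftrightarrow> a \<le> b"
  by (metis anti invol)

lemma dm_sup: "neg (sup a b) = inf (neg a) (neg b)"
proof (rule antisym)
  show "neg (sup a b) \<le> inf (neg a) (neg b)" by (simp add: anti)
  have "a \<le> neg (inf (neg a) (neg b))" "b \<le> neg (inf (neg a) (neg b))"
    by (metis anti inf_le1 invol, metis anti inf_le2 invol)
  then have "sup a b \<le> neg (inf (neg a) (neg b))" by simp
  then show "inf (neg a) (neg b) \<le> neg (sup a b)" by (metis anti invol)
qed

lemma dm_inf: "neg (inf a b) = sup (neg a) (neg b)"
  by (metis dm_sup invol)

lemma dom: "x \<le> a \<Longrightarrow> inf a (sup (neg a) x) = x"
proof -
  assume "x \<le> a"
  then have "neg a \<le> neg x" by (rule anti)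
  then have "sup (neg a) (inf a (neg x)) = neg x" using om[of "neg a" "neg x"] by simp
  then have "neg (sup (neg a) (inf a (neg x))) = x" by simp
  then show ?thesis by (simp add: dm_sup dm_inf)
qed

lemma L1: "sup (neg a) (pj neg a c) = sup (neg a) c"
  unfolding pj_def using om[of "neg a" "sup (neg a) c"] by simp

lemma pj_le: "pj neg a c \<le> a" unfolding pj_def by simp

lemma adj: "pj neg a c \<le> b \<longleftrightarrow> c \<le> sup (neg a) (inf a b)"
proof
  assume h: "pj neg a c \<le> b"
  have "c \<le> sup (neg a) c" by simp
  also have "\<dots> = sup (neg a) (pj neg a c)" by (simp add: L1)
  also have "\<dots> \<le> sup (neg a) (inf a b)" using h pj_le by (meson inf_greatest sup_mono order_refl)
  finally show "c \<le> sup (neg a) (inf a b)" .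
next
  assume h: "c \<le> sup (neg a) (inf a b)"
  have "pj neg a c \<le> inf a (sup (neg a) (inf a b))" unfolding pj_def
    using h by (meson inf_mono order_refl le_supI sup_ge1)
  also have "\<dots> = inf a b" by (rule dom) simp
  finally show "pj neg a c \<le> b" by simp
qed

lemma pj_cut: "c \<le> a \<Longrightarrow> pj neg a c = c" unfolding pj_def by (rule dom)

lemma pj_expl: "c \<le> neg a \<Longrightarrow> pj neg a c = bot"
  unfolding pj_def by (simp add: sup_absorb1)

lemma pj_mono: "c \<le> d \<Longrightarrow> pj neg a c \<le> pj neg a d"
  unfolding pj_def by (meson inf_mono order_refl sup_mono)

lemma exch:
  assumes e: "pj neg b (pj neg a c) \<le> a" and f: "pj neg a (pj neg b c) \<le> b"
  shows "pj neg a (pj neg b c) \<le> pj neg b (pj neg a c)"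
proof -
  define p where "p = inf a b"
  define d where "d = pj neg a c"
  define E where "E = pj neg b d"
  have Ep: "E \<le> p" using e pj_le unfolding p_def E_def d_def by simp
  have np: "neg p = sup (neg a) (neg b)" unfolding p_def by (simp add: dm_inf)
  have fp: "pj neg a (pj neg b c) \<le> p" using f pj_le unfolding p_def by simp
  have "pj neg a (pj neg b c) \<le> sup (neg a) (pj neg b c)" unfolding pj_def by simp
  also have "\<dots> \<le> sup (neg a) (sup (neg b) c)" unfolding pj_def by (simp add: le_supI2)
  also have "\<dots> = sup (neg p) c" by (simp add: np sup_assoc)
  finally have "pj neg a (pj neg b c) \<le> pj neg p c" using fp unfolding pj_def by simp
  also have "pj neg p c \<le> E"
  proof -
    have dE: "d \<le> sup (neg b) E" unfolding E_def using L1[of b d] by (metis sup_ge2)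
    have "c \<le> sup (neg a) c" by simp
    also have "\<dots> = sup (neg a) d" unfolding d_def by (simp add: L1)
    also have "\<dots> \<le> sup (neg a) (sup (neg b) E)" using dE by (simp add: le_supI2)
    also have "\<dots> = sup (neg p) E" by (simp add: np sup_assoc)
    finally have "c \<le> sup (neg p) E" .
    then have "pj neg p c \<le> inf p (sup (neg p) E)" unfolding pj_def
      by (meson inf_mono order_refl le_supI sup_ge1)
    then show ?thesis using dom[OF Ep] by simp
  qed
  finally show ?thesis unfolding E_def d_def .
qed

lemma Lem: "inf (sup (neg a) (inf a z)) (sup a (inf (neg a) z)) \<le> z"
proof -
  define p where "p = inf a z"
  define q where "q = inf (neg a) z"
  define w where "w = inf (sup (neg a) p) (sup a q)"
  define r where "r = sup p q"
  have pa: "p \<le> a" and qa: "q \<le> neg a" unfolding p_def q_def by simp_all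
  have rw: "r \<le> w" unfolding r_def w_def using pa qa
    by (meson inf_greatest le_supI le_supI1 le_supI2 order_refl)
  have 1: "inf (neg p) (sup (neg a) p) = neg a"
    using dom[of "neg a" "neg p"] anti[OF pa] by (simp add: sup_commute)
  have 2: "inf (neg q) (sup a q) = a"
    using dom[of a "neg q"] anti[OF qa] by (simp add: sup_commute)
  have "inf (neg r) w = inf (inf (neg p) (sup (neg a) p)) (inf (neg q) (sup a q))"
    unfolding r_def w_def dm_sup by (simp add: inf_aci)
  also have "\<dots> = bot" using 1 2 by (simp add: inf_commute)
  finally have "w = r" using om[OF rw] by simp
  then show ?thesis unfolding w_def r_def p_def q_def by simp
qed

lemma exmid: "pj neg a c \<le> z \<Longrightarrow> pj neg (neg a) c \<le> z \<Longrightarrow> c \<le> z"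
  using Lem[of a z] by (simp add: adj) (meson inf_greatest order_trans)

end

fun sub_trm :: "(nat \<Rightarrow> 'c) \<Rightarrow> 'c trm \<Rightarrow> 'c trm" where
  "sub_trm \<sigma> (Var x) = Cst (\<sigma> x)"
| "sub_trm \<sigma> s = s"

fun sub :: "(nat \<Rightarrow> 'c) \<Rightarrow> 'c fm \<Rightarrow> 'c fm" where
  "sub \<sigma> (Eq a b) = Eq (sub_trm \<sigma> a) (sub_trm \<sigma> b)"
| "sub \<sigma> (Mem a b) = Mem (sub_trm \<sigma> a) (sub_trm \<sigma> b)"
| "sub \<sigma> (Conj \<phi> \<psi>) = Conj (sub \<sigma> \<phi>) (sub \<sigma> \<psi>)"
| "sub \<sigma> (Imp \<phi> \<psi>) = Imp (sub \<sigma> \<phi>) (sub \<sigma> \<psi>)"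
| "sub \<sigma> (Neg \<phi>) = Neg (sub \<sigma> \<phi>)"
| "sub \<sigma> (All \<phi>) = All (sub \<sigma> \<phi>)"

lemma fv_sub_trm[simp]: "fv_trm (sub_trm \<sigma> t) = {}" by (cases t) auto
lemma fv_sub[simp]: "fv (sub \<sigma> \<phi>) = {}" by (induct \<phi>) auto
lemma bnd_sub_trm[simp]: "bnd_ok_trm k (sub_trm \<sigma> t) = bnd_ok_trm k t" by (cases t) auto
lemma bnd_sub[simp]: "bnd_ok k (sub \<sigma> \<phi>) = bnd_ok k \<phi>" by (induct \<phi> arbitrary: k) auto
lemma closed_sub: "lc \<phi> \<Longrightarrow> closed (sub \<sigma> \<phi>)" by (simp add: lc_def closed_def)

lemma sub_inst: "sub \<sigma> (inst k t \<phi>) = inst k (sub_trm \<sigma> t) (sub \<sigma> \<phi>)"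
proof (induct \<phi> arbitrary: k)
  case (Eq a b) then show ?case by (cases a; cases b) auto
next
  case (Mem a b) then show ?case by (cases a; cases b) auto
qed auto

lemma sub_abst_trm: "bnd_ok_trm k a \<Longrightarrow>
  inst_trm k (Cst u) (sub_trm \<sigma> (abst_trm k x a)) = sub_trm (\<sigma>(x:=u)) a"
  by (cases a) auto

lemma sub_abst: "bnd_ok k \<phi> \<Longrightarrow> inst k (Cst u) (sub \<sigma> (abst k x \<phi>)) = sub (\<sigma>(x:=u)) \<phi>"
  by (induct \<phi> arbitrary: k) (auto simp: sub_abst_trm)

lemma sub_cong_trm: "\<forall>y\<in>fv_trm a. \<sigma> y = \<tau> y \<Longrightarrow> sub_trm \<sigma> a = sub_trm \<tau> a"
  by (cases a) auto

lemma sub_cong: "\<forall>y\<in>fv \<phi>. \<sigma> y = \<tau> y \<Longrightarrow> sub \<sigma> \<phi> = sub \<tau> \<phi>"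
  by (induct \<phi>) (auto intro: sub_cong_trm)

lemma sub_closed: "fv \<phi> = {} \<Longrightarrow> sub \<sigma> \<phi> = sub \<tau> \<phi>"
  by (rule sub_cong) simp

lemma sub_id: "fv \<phi> = {} \<Longrightarrow> sub \<sigma> \<phi> = \<phi>"
proof (induct \<phi>)
  case (Eq a b) then show ?case by (cases a; cases b) auto
next
  case (Mem a b) then show ?case by (cases a; cases b) auto
qed auto

lemma bnd_inst: "bnd_ok (Suc k) \<phi> \<Longrightarrow> is_term t \<Longrightarrow> bnd_ok k (inst k t \<phi>)"
proof (induct \<phi> arbitrary: k)
  case (Eq a b) then show ?case by (cases a; cases b; cases t) auto
next
  case (Mem a b) then show ?case by (cases a; cases b; cases t) auto
qed auto

lemma bnd_abst: "bnd_ok k \<phi> \<Longrightarrow> bnd_ok (Suc k) (abst k x \<phi>)"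
proof (induct \<phi> arbitrary: k)
  case (Eq a b) then show ?case by (cases a; cases b) auto
next
  case (Mem a b) then show ?case by (cases a; cases b) auto
qed auto

lemma deriv_lc: "deriv \<Gamma> \<psi> \<Longrightarrow> (\<forall>\<gamma>\<in>set \<Gamma>. lc \<gamma>) \<and> lc \<psi>"
proof (induct rule: deriv.induct)
  case (all_intro \<Gamma> \<phi> x) then show ?case by (auto simp: lc_def intro: bnd_abst)
next
  case (all_elim \<Gamma> \<phi> t) then show ?case by (auto simp: lc_def intro: bnd_inst)
qed (auto simp: lc_def)

definition chain :: "('q::complete_lattice \<Rightarrow> 'q) \<Rightarrow> ('c fm \<Rightarrow> 'q) \<Rightarrow> (nat \<Rightarrow> 'c) \<Rightarrow> 'c fm list \<Rightarrow> 'q" where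
  "chain neg I \<sigma> \<Gamma> = foldl (\<lambda>c \<phi>. pj neg (I (sub \<sigma> \<phi>)) c) top \<Gamma>"

lemma chain_snoc[simp]: "chain neg I \<sigma> (\<Gamma> @ [\<phi>]) = pj neg (I (sub \<sigma> \<phi>)) (chain neg I \<sigma> \<Gamma>)"
  by (simp add: chain_def)

lemma chain_snoc2[simp]: "chain neg I \<sigma> (\<Gamma> @ [\<phi>, \<psi>]) = pj neg (I (sub \<sigma> \<psi>)) (pj neg (I (sub \<sigma> \<phi>)) (chain neg I \<sigma> \<Gamma>))"
  by (simp add: chain_def)

lemma chain_Nil[simp]: "chain neg I \<sigma> [] = top" by (simp add: chain_def)

lemma chain_cong: "\<forall>\<gamma>\<in>set \<Gamma>. sub \<sigma> \<gamma> = sub \<tau> \<gamma> \<Longrightarrow> chain neg I \<sigma> \<Gamma> = chain neg I \<tau> \<Gamma>"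
  unfolding chain_def by (rule foldl_cong) auto

context
  fixes neg :: "'q::complete_lattice \<Rightarrow> 'q"
    and I :: "'c fm \<Rightarrow> 'q"
  assumes oml: "complete_oml neg"
    and I_conj: "\<And>\<phi> \<psi>. closed (Conj \<phi> \<psi>) \<Longrightarrow> I (Conj \<phi> \<psi>) = inf (I \<phi>) (I \<psi>)"
    and I_neg: "\<And>\<phi>. closed (Neg \<phi>) \<Longrightarrow> I (Neg \<phi>) = neg (I \<phi>)"
    and I_imp: "\<And>\<phi> \<psi>. closed (Imp \<phi> \<psi>) \<Longrightarrow>
                  I (Imp \<phi> \<psi>) = sup (neg (I \<phi>)) (inf (I \<phi>) (I \<psi>))"
    and I_all: "\<And>\<phi>. closed (All \<phi>) \<Longrightarrow> I (All \<phi>) = (INF u. I (inst 0 (Cst u) \<phi>))"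
begin

lemma Sconj: "lc (Conj a b) \<Longrightarrow> I (sub \<sigma> (Conj a b)) = inf (I (sub \<sigma> a)) (I (sub \<sigma> b))"
  using closed_sub[of "Conj a b" \<sigma>] by (simp add: I_conj)
lemma Sneg: "lc (Neg a) \<Longrightarrow> I (sub \<sigma> (Neg a)) = neg (I (sub \<sigma> a))"
  using closed_sub[of "Neg a" \<sigma>] by (simp add: I_neg)
lemma Simp: "lc (Imp a b) \<Longrightarrow> I (sub \<sigma> (Imp a b)) = sup (neg (I (sub \<sigma> a))) (inf (I (sub \<sigma> a)) (I (sub \<sigma> b)))"
  using closed_sub[of "Imp a b" \<sigma>] by (simp add: I_imp)
lemma Sall: "lc (All a) \<Longrightarrow> I (sub \<sigma> (All a)) = (INF u. I (inst 0 (Cst u) (sub \<sigma> a)))"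
  using closed_sub[of "All a" \<sigma>] by (simp add: I_all)

lemma sound: "deriv \<Gamma> \<psi> \<Longrightarrow> chain neg I \<sigma> \<Gamma> \<le> I (sub \<sigma> \<psi>)"
proof (induct arbitrary: \<sigma> rule: deriv.induct)
  case (assumption \<Gamma> \<phi>) then show ?case by (simp add: pj_le[OF oml])
next
  case (cut \<Gamma> \<phi> \<psi>)
  then have "pj neg (I (sub \<sigma> \<phi>)) (chain neg I \<sigma> \<Gamma>) = chain neg I \<sigma> \<Gamma>"
    using pj_cut[OF oml] by blast
  then show ?case using cut(4)[of \<sigma>] by simp
next
  case (paste \<Gamma> \<phi> \<psi>)
  then have "pj neg (I (sub \<sigma> \<phi>)) (chain neg I \<sigma> \<Gamma>) = chain neg I \<sigma> \<Gamma>"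
    using pj_cut[OF oml] by blast
  then show ?case using paste(4)[of \<sigma>] by simp
next
  case (compat_exchange \<Gamma> \<phi> \<psi> \<chi>)
  then show ?case using exch[OF oml] by simp (meson order_trans)

next
  case (conj_intro \<Gamma> \<phi> \<psi>)
  then have "lc (Conj \<phi> \<psi>)" using deriv_lc[OF conj_intro(1)] deriv_lc[OF conj_intro(3)] by (simp add: lc_def)
  then show ?case using conj_intro by (simp add: Sconj del: sub.simps)
next
  case (conj_elim1 \<Gamma> \<phi> \<psi>)
  then have "lc (Conj \<phi> \<psi>)" using deriv_lc by blast
  then show ?case using conj_elim1 using le_inf_iff by (simp add: Sconj del: sub.simps)
next
  case (conj_elim2 \<Gamma> \<phi> \<psi>)
  then have "lc (Conj \<phi> \<psi>)" using deriv_lc by blast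
  then show ?case using conj_elim2 using le_inf_iff by (simp add: Sconj del: sub.simps)
next
  case (imp_intro \<Gamma> \<phi> \<psi>)
  then have "lc (Imp \<phi> \<psi>)" using deriv_lc[OF imp_intro(1)] by (simp add: lc_def)
  then show ?case using imp_intro adj[OF oml] by (simp add: Simp del: sub.simps)
next
  case (imp_elim \<Gamma> \<phi> \<psi>)
  then have "lc (Imp \<phi> \<psi>)" using deriv_lc by blast
  then show ?case using imp_elim adj[OF oml] by (simp add: Simp del: sub.simps)
next
  case (excluded_middle \<Gamma> \<phi> \<psi>)
  then have "lc (Neg \<phi>)" using deriv_lc[OF excluded_middle(1)] deriv_lc[OF excluded_middle(3)] by (simp add: lc_def)
  then show ?case using excluded_middle(2,4) exmid[OF oml] by (simp add: Sneg del: sub.simps) (metis exmid[OF oml])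
next
  case (explosion \<Gamma> \<phi> \<psi>)
  then have "lc (Neg \<phi>)" using deriv_lc by blast
  then show ?case using explosion pj_expl[OF oml] by (simp add: Sneg del: sub.simps)
next
  case (all_intro \<Gamma> \<phi> x)
  then have lcp: "lc \<phi>" using deriv_lc by blast
  then have lcA: "lc (All (abst 0 x \<phi>))" by (simp add: lc_def bnd_abst)
  have "chain neg I \<sigma> \<Gamma> \<le> I (sub (\<sigma>(x:=u)) \<phi>)" for u
  proof -
    have "chain neg I \<sigma> \<Gamma> = chain neg I (\<sigma>(x:=u)) \<Gamma>"
      using all_intro(3) by (intro chain_cong ballI sub_cong) auto
    then show ?thesis using all_intro(2) by simp
  qed
  then show ?case using lcA lcp by (simp add: Sall sub_abst lc_def del: sub.simps) (simp add: INF_greatest)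
next
  case (all_elim \<Gamma> \<phi> t)
  then have lcA: "lc (All \<phi>)" using deriv_lc by blast
  obtain u where u: "sub_trm \<sigma> t = Cst u" using all_elim(3) by (cases t) auto
  have "chain neg I \<sigma> \<Gamma> \<le> (INF u. I (inst 0 (Cst u) (sub \<sigma> \<phi>)))"
    using all_elim(2)[of \<sigma>] lcA by (simp add: Sall del: sub.simps)
  also have "\<dots> \<le> I (inst 0 (Cst u) (sub \<sigma> \<phi>))" by (rule INF_lower) simp
  finally show ?case by (simp add: sub_inst u)
qed

end

theorem corollary5p2:
  fixes neg :: "'q::complete_lattice \<Rightarrow> 'q"
    and I :: "'c fm \<Rightarrow> 'q"
  assumes oml: "complete_oml neg"
    and I_conj: "\<And>\<phi> \<psi>. closed (Conj \<phi> \<psi>) \<Longrightarrow> I (Conj \<phi> \<psi>) = inf (I \<phi>) (I \<psi>)"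
    and I_neg: "\<And>\<phi>. closed (Neg \<phi>) \<Longrightarrow> I (Neg \<phi>) = neg (I \<phi>)"
    and I_imp: "\<And>\<phi> \<psi>. closed (Imp \<phi> \<psi>) \<Longrightarrow>
                  I (Imp \<phi> \<psi>) = sup (neg (I \<phi>)) (inf (I \<phi>) (I \<psi>))"
    and I_all: "\<And>\<phi>. closed (All \<phi>) \<Longrightarrow> I (All \<phi>) = (INF u. I (inst 0 (Cst u) \<phi>))"
    and cl: "closed \<phi>"
    and der: "deriv [] \<phi>"
  shows "I \<phi> = top"
proof -
  have "chain neg I (\<lambda>_. undefined) [] \<le> I (sub (\<lambda>_. undefined) \<phi>)"
    by (rule sound[OF oml I_conj I_neg I_imp I_all der])
  moreover have "sub (\<lambda>_. undefined) \<phi> = \<phi>" using cl by (simp add: closed_def sub_id)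
  ultimately show ?thesis by (simp add: top_le)
qed

end
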